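(* Under the same setting, let $\bm u_0^m,\bm u_1^m\in\mathbb R^d$, $\eta_0^m,\eta_1^m>0$, $\alpha\in[0,1]$, $\lambda_{ij}=\dfrac{\Delta t S_{ij}}{1+\alpha\Delta t(S_{ij}+S_{ji})}$, and assume either $\Delta t S_{01},\Delta t S_{10}\le 1$ or $\alpha=1$. Define $\eta_i^{n+1}$ by $\eta_0^{n+1}=(1-\lambda_{01})\eta_0^m+\lambda_{10}\eta_1^m$, $\eta_1^{n+1}=(1-\lambda_{10})\eta_1^m+\lambda_{01}\eta_0^m$, momenta $\bm F_0^{n+1}=(1-\lambda_{01})\eta_0^m\bm u_0^m+\lambda_{10}\eta_1^m\bm u_1^m$, $\bm F_1^{n+1}=(1-\lambda_{10})\eta_1^m\bm u_1^m+\lambda_{01}\eta_0^m\bm u_0^m$, and $\bm u_i^{n+1}=\bm F_i^{n+1}/\eta_i^{n+1}$ (assuming $\eta_i^{n+1}>0$). Then total momentum is conserved and the total kinetic energy does not increase: $$\sum_{i=0}^1\tfrac12\eta_i^{n+1}|\bm u_i^{n+1}|^2\le\sum_{i=0}^1\tfrac12\eta_i^m|\bm u_i^m|^2.$$ More precisely, the kinetic energy decreases by $\Delta K=\tfrac12\mu\,|\bm u_0^m-\bm u_1^m|^2\ge 0$, where $$\mu=\frac{\eta_0^m\eta_1^m\left[(1-\lambda_{01})\lambda_{01}\eta_0^m+(1-\lambda_{10})\lambda_{10}\eta_1^m\right]}{\left[\lambda_{01}\eta_0^m+(1-\lambda_{10})\eta_1^m\right]\left[\lambda_{10}\eta_1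^m+(1-\lambda_{01})\eta_0^m\right]}.$$
   Context: "Method 2" (mass-weighted) momentum transfers for a two-fluid system (fluids 0 and 1), with the same implicitness weight $\alpha$ for mass and momentum transfers. $\eta_i$ is the mass per unit volume of fluid $i$, $\bm u_i$ its velocity, $S_{ij}\ge0$ the mass transfer rate from fluid $i$ to fluid $j$, $\Delta t$ the timestep; superscript $m$ denotes values before the transfer step, $n+1$ after. The kinetic energy of the two-fluid system is $\sum_i \frac12\eta_i|\bm u_i|^2$. *)

theory Defs
  imports "HOL-Analysis.Analysis"
begin

definition transfer_lambda :: "real \<Rightarrow> real \<Rightarrow> real \<Rightarrow> real \<Rightarrow> real" where
  "transfer_lambda \<alpha> dt Sij Sji = dt * Sij / (1 + \<alpha> * dt * (Sij + Sji))"

end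

theory Submission
  imports Defs
begin

lemma L: fixes a b c d p q r :: real assumes A: "a+b\<noteq>0" and C: "c+d\<noteq>0"
  shows "(1/2)*(a+d)*p + (1/2)*(b+c)*q - ((1/2)*(a+b)*((a^2*p+2*a*b*r+b^2*q)/(a+b)^2) + (1/2)*(c+d)*((c^2*q+2*c*d*r+d^2*p)/(c+d)^2))
   = (1/2)*((a*b*(c+d)+c*d*(a+b))/((a+b)*(c+d)))*(p-2*r+q)"
proof -
  have AC: "(a+b)*(c+d) \<noteq> 0" using A C by simp
  have e1: "(1/2)*(a+b)*((a^2*p+2*a*b*r+b^2*q)/(a+b)^2) = ((1/2)*(a^2*p+2*a*b*r+b^2*q)*(c+d))/((a+b)*(c+d))"
    using A C by (simp add: power2_eq_square)
  have e2: "(1/2)*(c+d)*((c^2*q+2*c*d*r+d^2*p)/(c+d)^2) = ((1/2)*(c^2*q+2*c*d*r+d^2*p)*(a+b))/((a+b)*(c+d))"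
    using A C by (simp add: power2_eq_square)
  have e3: "(1/2)*(a+d)*p + (1/2)*(b+c)*q = (((1/2)*(a+d)*p + (1/2)*(b+c)*q)*((a+b)*(c+d)))/((a+b)*(c+d))"
    using AC by simp
  have e4: "(1/2)*((a*b*(c+d)+c*d*(a+b))/((a+b)*(c+d)))*(p-2*r+q) = ((1/2)*(a*b*(c+d)+c*d*(a+b))*(p-2*r+q))/((a+b)*(c+d))"
    by simp
  have num: "((1/2)*(a+d)*p + (1/2)*(b+c)*q)*((a+b)*(c+d)) - ((1/2)*(a^2*p+2*a*b*r+b^2*q)*(c+d) + (1/2)*(c^2*q+2*c*d*r+d^2*p)*(a+b))
     = (1/2)*(a*b*(c+d)+c*d*(a+b))*(p-2*r+q)" by algebra
  show ?thesis unfolding e1 e2 e4 apply (subst e3)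
    by (simp only: add_divide_distrib[symmetric] diff_divide_distrib[symmetric] num)
qed

lemma nsq: fixes u v :: "'a::euclidean_space" and a b A :: real
  shows "(norm ((1/A) *\<^sub>R (a *\<^sub>R u + b *\<^sub>R v)))\<^sup>2 = (a^2 * (u \<bullet> u) + 2*a*b*(u \<bullet> v) + b^2*(v \<bullet> v)) / A^2"
proof -
  have "(norm ((1/A) *\<^sub>R (a *\<^sub>R u + b *\<^sub>R v)))\<^sup>2 = (1/A)^2 * (norm (a *\<^sub>R u + b *\<^sub>R v))\<^sup>2"
    by (simp only: norm_scaleR power_mult_distrib power2_abs)
  also have "(norm (a *\<^sub>R u + b *\<^sub>R v))\<^sup>2 = a^2 * (u \<bullet> u) + 2*a*b*(u \<bullet> v) + b^2*(v \<bullet> v)"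
    unfolding power2_norm_eq_inner by (simp add: inner_add inner_commute power2_eq_square algebra_simps)
  finally show ?thesis by (simp add: power_divide)
qed

theorem mainTheorem5:
  fixes u0 u1 :: "'a :: euclidean_space"
    and \<eta>0 \<eta>1 \<alpha> dt S01 S10 :: real
  assumes h\<eta>0: "\<eta>0 > 0" and h\<eta>1: "\<eta>1 > 0"
    and h\<alpha>: "0 \<le> \<alpha>" "\<alpha> \<le> 1"
    and hdt: "dt > 0"
    and hS: "S01 \<ge> 0" "S10 \<ge> 0"
    and hcfl: "(dt * S01 \<le> 1 \<and> dt * S10 \<le> 1) \<or> \<alpha> = 1"
  defines "lam01 \<equiv> transfer_lambda \<alpha> dt S01 S10"
    and "lam10 \<equiv> transfer_lambda \<alpha> dt S10 S01"
  defines "\<eta>0n \<equiv> (1 - lam01) * \<eta>0 + lam10 * \<eta>1"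
    and "\<eta>1n \<equiv> (1 - lam10) * \<eta>1 + lam01 * \<eta>0"
  defines "F0n \<equiv> ((1 - lam01) * \<eta>0) *\<^sub>R u0 + (lam10 * \<eta>1) *\<^sub>R u1"
    and "F1n \<equiv> ((1 - lam10) * \<eta>1) *\<^sub>R u1 + (lam01 * \<eta>0) *\<^sub>R u0"
  defines "u0n \<equiv> (1 / \<eta>0n) *\<^sub>R F0n"
    and "u1n \<equiv> (1 / \<eta>1n) *\<^sub>R F1n"
  defines "\<mu> \<equiv> \<eta>0 * \<eta>1 * ((1 - lam01) * lam01 * \<eta>0 + (1 - lam10) * lam10 * \<eta>1)
               / ((lam01 * \<eta>0 + (1 - lam10) * \<eta>1) * (lam10 * \<eta>1 + (1 - lam01) * \<eta>0))"
  defines "Kold \<equiv> (1/2) * \<eta>0 * (norm u0)\<^sup>2 + (1/2) * \<eta>1 * (norm u1)\<^sup>2"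
    and "Knew \<equiv> (1/2) * \<eta>0n * (norm u0n)\<^sup>2 + (1/2) * \<eta>1n * (norm u1n)\<^sup>2"
  assumes hpos: "\<eta>0n > 0" "\<eta>1n > 0"
  shows "\<eta>0n *\<^sub>R u0n + \<eta>1n *\<^sub>R u1n = \<eta>0 *\<^sub>R u0 + \<eta>1 *\<^sub>R u1
         \<and> Knew \<le> Kold
         \<and> Kold - Knew = (1/2) * \<mu> * (norm (u0 - u1))\<^sup>2
         \<and> (1/2) * \<mu> * (norm (u0 - u1))\<^sup>2 \<ge> 0"
proof -
  have l01: "0 \<le> lam01 \<and> lam01 \<le> 1" and l10: "0 \<le> lam10 \<and> lam10 \<le> 1"
  proof -
    have g: "0 \<le> transfer_lambda \<alpha> dt x y \<and> transfer_lambda \<alpha> dt x y \<le> 1"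
      if "x \<ge> 0" "y \<ge> 0" "(dt * x \<le> 1) \<or> \<alpha> = 1" for x y
    proof -
      have D: "1 + \<alpha> * dt * (x + y) \<ge> 1" using that h\<alpha> hdt by (simp add: mult_nonneg_nonneg)
      have "dt * x \<le> 1 + \<alpha> * dt * (x + y)"
        using that(3)
      proof
        assume "dt * x \<le> 1" thus ?thesis using D by linarith
      next
        assume "\<alpha> = 1" thus ?thesis using that hdt by (simp add: algebra_simps mult_nonneg_nonneg)
      qed
      thus ?thesis using D that hdt unfolding transfer_lambda_def
        by (auto simp: divide_simps)
    qed
    show "0 \<le> lam01 \<and> lam01 \<le> 1" unfolding lam01_def using g hS hcfl by blast
    show "0 \<le> lam10 \<and> lam10 \<le> 1" unfolding lam10_def using g hS hcfl by blast
  qed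
  define a where "a = (1 - lam01) * \<eta>0"
  define b where "b = lam10 * \<eta>1"
  define c where "c = (1 - lam10) * \<eta>1"
  define d where "d = lam01 * \<eta>0"
  define p where "p = u0 \<bullet> u0"
  define q where "q = u1 \<bullet> u1"
  define r where "r = u0 \<bullet> u1"
  have E0: "\<eta>0n = a + b" and E1: "\<eta>1n = c + d" unfolding \<eta>0n_def \<eta>1n_def a_def b_def c_def d_def by auto
  have n0: "a + b \<noteq> 0" "c + d \<noteq> 0" using hpos E0 E1 by auto
  have mom: "\<eta>0n *\<^sub>R u0n + \<eta>1n *\<^sub>R u1n = \<eta>0 *\<^sub>R u0 + \<eta>1 *\<^sub>R u1"
  proof -
    have "\<eta>0n *\<^sub>R u0n = F0n" "\<eta>1n *\<^sub>R u1n = F1n" unfolding u0n_def u1n_def scaleR_scaleR using hpos by simp_all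
    moreover have "F0n + F1n = \<eta>0 *\<^sub>R u0 + \<eta>1 *\<^sub>R u1"
      proof -
      have "F0n + F1n = (((1 - lam01) * \<eta>0) + (lam01 * \<eta>0)) *\<^sub>R u0 + ((lam10 * \<eta>1) + ((1 - lam10) * \<eta>1)) *\<^sub>R u1"
        unfolding F0n_def F1n_def scaleR_left_distrib by (simp only: ac_simps)
      thus ?thesis by (simp add: algebra_simps)
    qed
    ultimately show ?thesis by simp
  qed
  have nd: "(norm (u0 - u1))\<^sup>2 = p - 2*r + q"
    unfolding power2_norm_eq_inner p_def q_def r_def by (simp add: inner_diff inner_commute)
  have k0: "(norm u0)\<^sup>2 = p" "(norm u1)\<^sup>2 = q" unfolding power2_norm_eq_inner p_def q_def by auto
  have ku0: "(norm u0n)\<^sup>2 = (a^2*p + 2*a*b*r + b^2*q) / (a+b)^2"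
    unfolding u0n_def F0n_def E0 a_def[symmetric] b_def[symmetric] nsq p_def q_def r_def by simp
  have ku1: "(norm u1n)\<^sup>2 = (c^2*q + 2*c*d*r + d^2*p) / (c+d)^2"
    unfolding u1n_def F1n_def E1 c_def[symmetric] d_def[symmetric] nsq p_def q_def r_def
    by (simp add: inner_commute)
  have mu: "\<mu> = (a*b*(c+d)+c*d*(a+b))/((a+b)*(c+d))"
  proof -
    have "\<eta>0 * \<eta>1 * ((1 - lam01) * lam01 * \<eta>0 + (1 - lam10) * lam10 * \<eta>1) = a*b*(c+d)+c*d*(a+b)"
      unfolding a_def b_def c_def d_def by algebra
    moreover have "(lam01 * \<eta>0 + (1 - lam10) * \<eta>1) * (lam10 * \<eta>1 + (1 - lam01) * \<eta>0) = (a+b)*(c+d)"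
      unfolding a_def b_def c_def d_def by algebra
    ultimately show ?thesis unfolding \<mu>_def by simp
  qed
  have Ko: "Kold = (1/2)*(a+d)*p + (1/2)*(b+c)*q"
    unfolding Kold_def k0 a_def b_def c_def d_def by algebra
  have diff: "Kold - Knew = (1/2) * \<mu> * (norm (u0 - u1))\<^sup>2"
    unfolding Ko Knew_def ku0 ku1 nd mu E0 E1 using L[OF n0] by simp
  have mupos: "\<mu> \<ge> 0" unfolding mu E0[symmetric] E1[symmetric] using l01 l10 h\<eta>0 h\<eta>1 hpos
    unfolding a_def b_def c_def d_def
    by (intro divide_nonneg_pos mult_nonneg_nonneg add_nonneg_nonneg) auto
  have "(1/2) * \<mu> * (norm (u0 - u1))\<^sup>2 \<ge> 0" using mupos by simp
  with diff mom show ?thesis by linarith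
qed

end
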